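(* For any compact domain $\mathcal{K}\subset\mathbb{R}^{d_x}$, if $N<\max(d_x+1,d_y)$ then $\mathcal{N}_N(\sigma_\alpha)$ is not dense in $C(\mathcal{K},\mathbb{R}^{d_y})$ with respect to the uniform norm on $\mathcal{K}$; i.e., leaky-ReLU networks of width $N$ do not have the universal approximation property for $C(\mathcal{K},\mathbb{R}^{d_y})$.
   Context: Fix $\alpha\in\mathbb{R}^+\setminus\{1\}$ and let $\sigma_\alpha(x)=x$ for $x>0$ and $\sigma_\alpha(x)=\alpha x$ for $x\le 0$, applied coordinatewise (leaky-ReLU). A leaky-ReLU network of width $N$ and depth $L$ from $\mathbb{R}^{d_x}$ to $\mathbb{R}^{d_y}$ is a map $x\mapsto W_{L+1}\sigma_\alpha(W_L(\cdots\sigma_\alpha(W_1x+b_1)\cdots)+b_L)+b_{L+1}$ with $W_1\in\mathbb{R}^{N\times d_x}$, $W_i\in\mathbb{R}^{N\times N}$ for $2\le i\le L$, $b_i\in\mathbb{R}^N$ for $1\le i\le L$, $W_{L+1}\in\mathbb{R}^{d_y\times N}$, $b_{L+1}\in\mathbb{R}^{d_y}$. $\mathcal{N}_N(\sigma_\alpha)$ denotes the set of all such networks of width $N$ over all depths $L$. *)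

theory Defs
  imports "HOL-Analysis.Analysis"
begin

definition lrelu :: "real \<Rightarrow> real \<Rightarrow> real" where
  "lrelu \<alpha> x = (if x > 0 then x else \<alpha> * x)"

text \<open>Hidden states of width N are represented as functions nat => real,
  only indices i < N are meaningful (others are set to 0).\<close>
definition lrelu_act :: "real \<Rightarrow> nat \<Rightarrow> (nat \<Rightarrow> real) \<Rightarrow> (nat \<Rightarrow> real)" where
  "lrelu_act \<alpha> N v = (\<lambda>i. if i < N then lrelu \<alpha> (v i) else 0)"

definition first_layer ::
  "nat \<Rightarrow> (nat \<Rightarrow> 'dx \<Rightarrow> real) \<Rightarrow> (nat \<Rightarrow> real) \<Rightarrow> real^'dx::finite \<Rightarrow> (nat \<Rightarrow> real)" where
  "first_layer N W b x = (\<lambda>i. if i < N then (\<Sum>j\<in>UNIV. W i j * x $ j) + b i else 0)"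

definition hidden_layer ::
  "nat \<Rightarrow> (nat \<Rightarrow> nat \<Rightarrow> real) \<Rightarrow> (nat \<Rightarrow> real) \<Rightarrow> (nat \<Rightarrow> real) \<Rightarrow> (nat \<Rightarrow> real)" where
  "hidden_layer N W b v = (\<lambda>i. if i < N then (\<Sum>j<N. W i j * v j) + b i else 0)"

definition output_layer ::
  "nat \<Rightarrow> ('dy::finite \<Rightarrow> nat \<Rightarrow> real) \<Rightarrow> ('dy \<Rightarrow> real) \<Rightarrow> (nat \<Rightarrow> real) \<Rightarrow> real^'dy" where
  "output_layer N W b v = (\<chi> k. (\<Sum>j<N. W k j * v j) + b k)"

text \<open>A leaky-ReLU network of width N and depth L = 1 + length Ls:
  x |-> W_{L+1} sigma(W_L(... sigma(W_1 x + b_1) ...) + b_L) + b_{L+1}.\<close>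
definition lrelu_net_eval ::
  "real \<Rightarrow> nat \<Rightarrow> (nat \<Rightarrow> 'dx \<Rightarrow> real) \<Rightarrow> (nat \<Rightarrow> real)
   \<Rightarrow> ((nat \<Rightarrow> nat \<Rightarrow> real) \<times> (nat \<Rightarrow> real)) list
   \<Rightarrow> ('dy::finite \<Rightarrow> nat \<Rightarrow> real) \<Rightarrow> ('dy \<Rightarrow> real) \<Rightarrow> real^'dx::finite \<Rightarrow> real^'dy" where
  "lrelu_net_eval \<alpha> N W1 b1 Ls Wo bo x =
     output_layer N Wo bo
       (foldl (\<lambda>v (W, b). lrelu_act \<alpha> N (hidden_layer N W b v))
              (lrelu_act \<alpha> N (first_layer N W1 b1 x)) Ls)"

definition lrelu_nets :: "real \<Rightarrow> nat \<Rightarrow> (real^'dx::finite \<Rightarrow> real^'dy::finite) set" where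
  "lrelu_nets \<alpha> N = {lrelu_net_eval \<alpha> N W1 b1 Ls Wo bo | W1 b1 Ls Wo bo. True}"

end

theory Submission
  imports Defs
begin

definition Mprop :: "(real^'n::finite \<Rightarrow> real) \<Rightarrow> bool" where
  "Mprop \<phi> \<longleftrightarrow> (\<forall>z. \<exists>\<gamma>::real \<Rightarrow> real^'n. continuous_on {0..} \<gamma> \<and> \<gamma> 0 = z \<and> (\<forall>t\<ge>0. \<phi> z \<le> \<phi> (\<gamma> t))
      \<and> \<not> bounded (\<gamma> ` {0..}))"

definition good :: "(real^'n::finite \<Rightarrow> real^'n) \<Rightarrow> bool" where
  "good Y \<longleftrightarrow> (\<forall>\<phi>. Mprop \<phi> \<longrightarrow> Mprop (\<phi> \<circ> Y))"

lemma good_comp: "good A \<Longrightarrow> good B \<Longrightarrow> good (B \<circ> A)"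
  unfolding good_def by (metis comp_assoc)

lemma good_homeo:
  fixes T S :: "real^'n::finite \<Rightarrow> real^'n"
  assumes cT: "continuous_on UNIV T" and cS: "continuous_on UNIV S"
    and TS: "\<And>y. T (S y) = y" and ST: "\<And>x. S (T x) = x"
  shows "good T"
  unfolding good_def
proof (intro allI impI)
  fix \<phi> :: "real^'n \<Rightarrow> real"
  assume "Mprop \<phi>"
  show "Mprop (\<phi> \<circ> T)" unfolding Mprop_def
  proof
  fix z :: "real^'n"
  obtain \<gamma> :: "real \<Rightarrow> real^'n" where g: "continuous_on {0..} \<gamma>" "\<gamma> 0 = T z" "\<forall>t\<ge>0. \<phi> (T z) \<le> \<phi> (\<gamma> t)"
     "\<not> bounded (\<gamma> ` {0..})" using \<open>Mprop \<phi>\<close> unfolding Mprop_def by blast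
  show "\<exists>\<gamma>::real\<Rightarrow>real^'n. continuous_on {0..} \<gamma> \<and> \<gamma> 0 = z \<and> (\<forall>t\<ge>0. (\<phi> \<circ> T) z \<le> (\<phi> \<circ> T) (\<gamma> t)) \<and> \<not> bounded (\<gamma> ` {0..})"
  proof (rule exI[where x="S \<circ> \<gamma>"], intro conjI)
    show "continuous_on {0..} (S \<circ> \<gamma>)"
      by (rule continuous_on_compose[OF g(1)]) (rule continuous_on_subset[OF cS], simp)
    show "(S \<circ> \<gamma>) 0 = z" using g(2) ST by simp
    show "\<forall>t\<ge>0. (\<phi> \<circ> T) z \<le> (\<phi> \<circ> T) ((S \<circ> \<gamma>) t)" using g(3) TS by simp
    show "\<not> bounded ((S \<circ> \<gamma>) ` {0..})"
    proof
      assume b: "bounded ((S \<circ> \<gamma>) ` {0..})"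
      have "compact (T ` closure ((S \<circ> \<gamma>) ` {0..}))"
        by (rule compact_continuous_image[OF continuous_on_subset[OF cT] compact_closure[THEN iffD2, OF b]]) simp
      hence "bounded (T ` closure ((S \<circ> \<gamma>) ` {0..}))" by (rule compact_imp_bounded)
      moreover have "\<gamma> ` {0..} \<subseteq> T ` closure ((S \<circ> \<gamma>) ` {0..})"
      proof
        fix y assume "y \<in> \<gamma> ` {0..}"
        then obtain t where t: "t \<in> {0..}" "y = \<gamma> t" by blast
        have yT: "y = T ((S \<circ> \<gamma>) t)" using t(2) TS by simp
        have "(S \<circ> \<gamma>) t \<in> (S \<circ> \<gamma>) ` {0..}" using t(1) by (rule imageI)
        hence "(S \<circ> \<gamma>) t \<in> closure ((S \<circ> \<gamma>) ` {0..})" using closure_subset by (rule subsetD[rotated])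
        thus "y \<in> T ` closure ((S \<circ> \<gamma>) ` {0..})" unfolding yT by (rule imageI)
      qed
      ultimately show False using g(4) bounded_subset by blast
    qed
  qed
  qed
qed

lemma ray_unbounded:
  fixes d z :: "'a::real_normed_vector"
  assumes "d \<noteq> 0"
  shows "\<not> bounded ((\<lambda>t::real. z + t *\<^sub>R d) ` {0..})"
proof
  assume "bounded ((\<lambda>t::real. z + t *\<^sub>R d) ` {0..})"
  then obtain B where B: "\<And>t. t \<ge> 0 \<Longrightarrow> norm (z + t *\<^sub>R d) \<le> B"
    unfolding bounded_iff by auto
  define t where "t = (B + norm z + 1) / norm d"
  have nd: "norm d > 0" using assms by simp
  have "norm z \<le> B" using B[of 0] by simp
  hence "B + norm z + 1 > 0" using norm_ge_zero[of z] by linarith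
  hence t0: "t \<ge> 0" unfolding t_def using nd by simp
  have "norm (t *\<^sub>R d) \<le> norm (z + t *\<^sub>R d) + norm z" using norm_triangle_ineq4[of "z + t *\<^sub>R d" z] by simp
  also have "\<dots> \<le> B + norm z" using B[OF t0] by simp
  finally have "t * norm d \<le> B + norm z" using t0 by simp
  moreover have "t * norm d = B + norm z + 1" unfolding t_def using nd by simp
  ultimately show False by simp
qed

lemma good_affine:
  fixes L :: "real^'n::finite \<Rightarrow> real^'n"
  assumes L: "linear L"
  shows "good (\<lambda>y. L y + b)"
proof (cases "inj L")
  case True
  hence "surj L" using linear_injective_imp_surjective[OF L] by simp
  then obtain S where S: "linear S" "L \<circ> S = id" using linear_surjective_right_inverse[OF L] by blast
  obtain S' where S': "linear S'" "S' \<circ> L = id" using linear_injective_left_inverse[OF L True] by blast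
  have "S' = S" using S S' by (metis comp_assoc comp_id id_comp)
  show ?thesis
  proof (rule good_homeo[where S="\<lambda>y. S (y - b)"])
    show "continuous_on UNIV (\<lambda>y. L y + b)"
      by (intro continuous_intros linear_continuous_on) (simp add: L linear_conv_bounded_linear[symmetric])
    show "continuous_on UNIV (\<lambda>y. S (y - b))"
      by (rule continuous_on_compose2[of UNIV S], rule linear_continuous_on)
         (auto intro!: continuous_intros simp add: S linear_conv_bounded_linear[symmetric])
    show "\<And>y. L (S (y - b)) + b = y" using S by (simp add: fun_eq_iff)
    show "\<And>x. S (L x + b - b) = x" using S' \<open>S' = S\<close> by (simp add: fun_eq_iff)
  qed
next
  case False
  then obtain d where d: "L d = 0" "d \<noteq> 0" using linear_injective_0[OF L] by blast
  show ?thesis unfolding good_def Mprop_def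
  proof (intro allI impI)
    fix \<phi> :: "real^'n \<Rightarrow> real" and z
    show "\<exists>\<gamma>::real\<Rightarrow>_. continuous_on {0..} \<gamma> \<and> \<gamma> 0 = z \<and> (\<forall>t\<ge>0. (\<phi> \<circ> (\<lambda>y. L y + b)) z \<le> (\<phi> \<circ> (\<lambda>y. L y + b)) (\<gamma> t)) \<and> \<not> bounded (\<gamma> ` {0..})"
    proof (rule exI[where x="\<lambda>t::real. z + t *\<^sub>R d"], intro conjI)
      show "continuous_on {0..} (\<lambda>t::real. z + t *\<^sub>R d)" by (intro continuous_intros)
      show "z + 0 *\<^sub>R d = z" by simp
      show "\<forall>t\<ge>0. (\<phi> \<circ> (\<lambda>y. L y + b)) z \<le> (\<phi> \<circ> (\<lambda>y. L y + b)) (z + t *\<^sub>R d)"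
        using d by (simp add: linear_add[OF L] linear_scale[OF L])
      show "\<not> bounded ((\<lambda>t::real. z + t *\<^sub>R d) ` {0..})" by (rule ray_unbounded[OF d(2)])
    qed
  qed
qed

lemma Mprop_linear:
  fixes f0 :: "real^'n::finite \<Rightarrow> real"
  assumes L: "linear f0"
  shows "Mprop (\<lambda>y. f0 y + c)"
  unfolding Mprop_def
proof
  fix z
  define u :: "real^'n" where "u = axis undefined 1"
  have u0: "u \<noteq> 0" unfolding u_def by (simp add: axis_eq_0_iff)
  define d where "d = (if f0 u \<ge> 0 then u else -u)"
  have d0: "d \<noteq> 0" using u0 unfolding d_def by auto
  have fd: "f0 d \<ge> 0" unfolding d_def using linear_neg[OF L] by auto
  show "\<exists>\<gamma>::real\<Rightarrow>_. continuous_on {0..} \<gamma> \<and> \<gamma> 0 = z \<and> (\<forall>t\<ge>0. f0 z + c \<le> f0 (\<gamma> t) + c) \<and> \<not> bounded (\<gamma> ` {0..})"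
  proof (rule exI[where x="\<lambda>t::real. z + t *\<^sub>R d"], intro conjI)
    show "continuous_on {0..} (\<lambda>t::real. z + t *\<^sub>R d)" by (intro continuous_intros)
    show "z + 0 *\<^sub>R d = z" by simp
    show "\<forall>t\<ge>0. f0 z + c \<le> f0 (z + t *\<^sub>R d) + c"
      using fd by (simp add: linear_add[OF L] linear_scale[OF L])
    show "\<not> bounded ((\<lambda>t::real. z + t *\<^sub>R d) ` {0..})" by (rule ray_unbounded[OF d0])
  qed
qed

lemma lrelu_alt: "lrelu a x = max 0 x + a * min 0 x"
  unfolding lrelu_def by auto

lemma lrelu_inv: "a > 0 \<Longrightarrow> lrelu a (lrelu (1/a) x) = x"
  unfolding lrelu_def by (auto simp: field_simps zero_less_mult_iff)

lemma good_lrelu: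
  assumes "a > 0"
  shows "good (\<lambda>y::real^'n::finite. \<chi> j. lrelu a (y $ j))"
proof (rule good_homeo[where S="\<lambda>y. \<chi> j. lrelu (1/a) (y $ j)"])
  show "continuous_on UNIV (\<lambda>y::real^'n. \<chi> j. lrelu a (y $ j))"
    unfolding lrelu_alt by (intro continuous_intros)
  show "continuous_on UNIV (\<lambda>y::real^'n. \<chi> j. lrelu (1/a) (y $ j))"
    unfolding lrelu_alt by (intro continuous_intros)
  show "\<And>y. (\<chi> j. lrelu a ((\<chi> j. lrelu (1 / a) (y $ j)) $ j)) = y"
    using lrelu_inv[OF assms] by (simp add: vec_eq_iff)
  have "\<And>x. lrelu (1/a) (lrelu a x) = x" using lrelu_inv[of "1/a"] assms by simp
  thus "\<And>x. (\<chi> j. lrelu (1 / a) ((\<chi> j. lrelu a (x $ j)) $ j)) = x"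
    by (simp add: vec_eq_iff)
qed


lemma net_M:
  fixes g :: "real^'dx::finite \<Rightarrow> real^'dy::finite"
  assumes a: "\<alpha> > 0" and N: "N \<le> CARD('dx)" and g: "g \<in> lrelu_nets \<alpha> N"
  shows "Mprop (\<lambda>x. g x $ k0)"
proof -
  obtain W1 b1 Ls Wo bo where gdef: "g = lrelu_net_eval \<alpha> N W1 b1 Ls Wo bo"
    using g unfolding lrelu_nets_def by blast
  obtain e :: "'dx \<Rightarrow> nat" where e: "bij_betw e UNIV {0..<CARD('dx)}"
    using ex_bij_betw_finite_nat[of "UNIV::'dx set"] by auto
  define ei where "ei = inv_into UNIV e"
  have eei: "e (ei i) = i" if "i < N" for i
    unfolding ei_def using bij_betw_inv_into_right[OF e] that N by auto
  define sig :: "real^'dx \<Rightarrow> real^'dx" where "sig = (\<lambda>y. \<chi> j. lrelu \<alpha> (y $ j))"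
  have gsig: "good sig" unfolding sig_def by (rule good_lrelu[OF a])
  define Rel :: "(nat \<Rightarrow> real) \<Rightarrow> real^'dx \<Rightarrow> bool" where "Rel = (\<lambda>v y. \<forall>i<N. v i = y $ ei i)"
  have step: "\<forall>s0 Y0. good Y0 \<longrightarrow> (\<forall>x. Rel (s0 x) (Y0 x)) \<longrightarrow>
     (\<exists>Y. good Y \<and> (\<forall>x. Rel (foldl (\<lambda>v (W, b). lrelu_act \<alpha> N (hidden_layer N W b v)) (s0 x) Ls) (Y x)))"
  proof (induction Ls)
    case Nil
    then show ?case by auto
  next
    case (Cons Wb Ls)
    obtain W b where Wb: "Wb = (W, b)" by (cases Wb)
    show ?case
    proof (intro allI impI)
      fix s0 :: "real^'dx \<Rightarrow> nat \<Rightarrow> real" and Y0 :: "real^'dx \<Rightarrow> real^'dx"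
      assume gY0: "good Y0" and R0: "\<forall>x. Rel (s0 x) (Y0 x)"
      define Lh :: "real^'dx \<Rightarrow> real^'dx" where
        "Lh = (\<lambda>y. \<chi> j. if e j < N then (\<Sum>i<N. W (e j) i * y $ ei i) else y $ j)"
      define c :: "real^'dx" where "c = (\<chi> j. if e j < N then b (e j) else 0)"
      have linLh: "linear Lh"
        by (rule linearI) (auto simp: Lh_def vec_eq_iff sum.distrib algebra_simps sum_distrib_left)
      have g1: "good (sig \<circ> (\<lambda>y. Lh y + c) \<circ> Y0)"
        by (intro good_comp gY0 gsig good_affine linLh)
      have R1: "\<forall>x. Rel (lrelu_act \<alpha> N (hidden_layer N W b (s0 x))) ((sig \<circ> (\<lambda>y. Lh y + c) \<circ> Y0) x)"
      proof (intro allI)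
        fix x
        show "Rel (lrelu_act \<alpha> N (hidden_layer N W b (s0 x))) ((sig \<circ> (\<lambda>y. Lh y + c) \<circ> Y0) x)"
          unfolding Rel_def
        proof (intro allI impI)
          fix i assume i: "i < N"
          have "(\<Sum>j<N. W i j * s0 x j) = (\<Sum>j<N. W i j * Y0 x $ ei j)"
            using R0 unfolding Rel_def by (intro sum.cong) auto
          thus "lrelu_act \<alpha> N (hidden_layer N W b (s0 x)) i = ((sig \<circ> (\<lambda>y. Lh y + c) \<circ> Y0) x) $ ei i"
            using i eei[OF i] by (simp add: lrelu_act_def hidden_layer_def sig_def Lh_def c_def)
        qed
      qed
      from Cons.IH[THEN spec, THEN spec, THEN mp, THEN mp, OF g1 R1] show
        "\<exists>Y. good Y \<and> (\<forall>x. Rel (foldl (\<lambda>v (W, b). lrelu_act \<alpha> N (hidden_layer N W b v)) (s0 x) (Wb # Ls)) (Y x))"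
        by (simp add: Wb)
    qed
  qed
  define L1 :: "real^'dx \<Rightarrow> real^'dx" where
    "L1 = (\<lambda>x. \<chi> j. if e j < N then (\<Sum>i\<in>UNIV. W1 (e j) i * x $ i) else x $ j)"
  define c1 :: "real^'dx" where "c1 = (\<chi> j. if e j < N then b1 (e j) else 0)"
  have linL1: "linear L1"
    by (rule linearI) (auto simp: L1_def vec_eq_iff sum.distrib algebra_simps sum_distrib_left)
  have g1: "good (sig \<circ> (\<lambda>y. L1 y + c1))"
    by (intro good_comp gsig good_affine linL1)
  have R1: "\<forall>x. Rel (lrelu_act \<alpha> N (first_layer N W1 b1 x)) ((sig \<circ> (\<lambda>y. L1 y + c1)) x)"
    unfolding Rel_def using eei
    by (simp add: lrelu_act_def first_layer_def sig_def L1_def c1_def)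
  obtain Y where Y: "good Y"
    "\<forall>x. Rel (foldl (\<lambda>v (W, b). lrelu_act \<alpha> N (hidden_layer N W b v)) (lrelu_act \<alpha> N (first_layer N W1 b1 x)) Ls) (Y x)"
    using step[THEN spec, THEN spec, THEN mp, THEN mp, OF g1 R1] by blast
  define f0 :: "real^'dx \<Rightarrow> real" where "f0 = (\<lambda>y. \<Sum>j<N. Wo k0 j * y $ ei j)"
  have linf0: "linear f0"
    by (rule linearI) (auto simp: f0_def sum.distrib algebra_simps sum_distrib_left)
  have "Mprop ((\<lambda>y. f0 y + bo k0) \<circ> Y)"
    using Y(1) Mprop_linear[OF linf0] unfolding good_def by blast
  moreover have "(\<lambda>y. f0 y + bo k0) \<circ> Y = (\<lambda>x. g x $ k0)"
  proof
    fix x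
    show "((\<lambda>y. f0 y + bo k0) \<circ> Y) x = g x $ k0"
      using Y(2)[rule_format, of x] unfolding Rel_def
      by (simp add: gdef lrelu_net_eval_def output_layer_def f0_def)
  qed
  ultimately show ?thesis by simp
qed


lemma dist_axis_line:
  fixes c :: "real^'n::finite"
  shows "dist (c + a *\<^sub>R axis i 1) (c + b *\<^sub>R axis i 1) = \<bar>a - b\<bar>"
proof -
  have "(c + a *\<^sub>R axis i 1) - (c + b *\<^sub>R axis i 1) = (a - b) *\<^sub>R axis i (1::real)"
    by (simp add: algebra_simps)
  thus ?thesis by (simp add: dist_norm norm_axis_1)
qed

lemma case_dx:
  fixes K :: "(real^'dx::finite) set" and \<alpha> :: real and N :: nat
  assumes a: "\<alpha> > 0" and K: "interior K \<noteq> {}" and N: "N \<le> CARD('dx)"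
  shows "\<exists>f :: real^'dx \<Rightarrow> real^'dy::finite. continuous_on K f \<and>
           (\<exists>\<epsilon>>0. \<forall>g\<in>lrelu_nets \<alpha> N. \<exists>x\<in>K. \<epsilon> \<le> dist (f x) (g x))"
proof -
  obtain c where "c \<in> interior K" using K by blast
  then obtain r where r: "r > 0" "ball c r \<subseteq> K" using mem_interior by blast
  define f :: "real^'dx \<Rightarrow> real^'dy" where "f = (\<lambda>x. \<chi> k. max 0 (1 - 2 * dist x c / r))"
  have cf: "continuous_on K f" unfolding f_def using r(1) by (intro continuous_intros) auto
  have "\<forall>g\<in>lrelu_nets \<alpha> N. \<exists>x\<in>K. 1/3 \<le> dist (f x) (g x)"
  proof (rule ballI, rule ccontr)
    fix g :: "real^'dx \<Rightarrow> real^'dy"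
    assume g: "g \<in> lrelu_nets \<alpha> N" and "\<not> (\<exists>x\<in>K. 1/3 \<le> dist (f x) (g x))"
    hence close: "\<And>x. x \<in> K \<Longrightarrow> dist (f x) (g x) < 1/3" by force
    define k0 :: 'dy where "k0 = undefined"
    have comp: "\<bar>f x $ k0 - g x $ k0\<bar> < 1/3" if "x \<in> K" for x
      using component_le_norm_cart[of "f x - g x" k0] close[OF that] by (simp add: dist_norm)
    have "Mprop (\<lambda>x. g x $ k0)" by (rule net_M[OF a N g])
    then obtain \<gamma> :: "real \<Rightarrow> real^'dx" where gm: "continuous_on {0..} \<gamma>" "\<gamma> 0 = c"
      "\<forall>t\<ge>0. g c $ k0 \<le> g (\<gamma> t) $ k0" "\<not> bounded (\<gamma> ` {0..})"
      unfolding Mprop_def by blast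
    have "\<exists>t1\<ge>0. r/2 < dist (\<gamma> t1) c"
    proof (rule ccontr)
      assume "\<not> ?thesis"
      hence "\<gamma> ` {0..} \<subseteq> cball c (r/2)" by (auto simp: dist_commute)
      thus False using gm(4) bounded_cball bounded_subset by blast
    qed
    then obtain t1 where t1: "t1 \<ge> 0" "r/2 < dist (\<gamma> t1) c" by blast
    have "continuous_on {0..t1} (\<lambda>t. dist (\<gamma> t) c)"
      by (intro continuous_intros continuous_on_subset[OF gm(1)]) auto
    then obtain t where t: "t \<ge> 0" "t \<le> t1" "dist (\<gamma> t) c = r/2"
      using IVT'[of "\<lambda>t. dist (\<gamma> t) c" 0 "r/2" t1] t1 gm(2) r(1) by auto
    have xK: "\<gamma> t \<in> K" using t(3) r by (intro subsetD[OF r(2)]) (simp add: dist_commute)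
    have cK: "c \<in> K" using r by auto
    have "f (\<gamma> t) $ k0 = 0" using t(3) r(1) by (simp add: f_def)
    moreover have "f c $ k0 = 1" by (simp add: f_def)
    ultimately show False using comp[OF xK] comp[OF cK] gm(3) t(1) by force
  qed
  thus ?thesis using cf by (intro exI[of _ f] conjI exI[of _ "1/3"]) auto
qed


lemma net_orth:
  fixes g :: "real^'dx::finite \<Rightarrow> real^'dy::finite"
  assumes N: "N < CARD('dy)" and g: "g \<in> lrelu_nets \<alpha> N"
  shows "\<exists>w. norm w = 1 \<and> (\<forall>x y. inner w (g x - g y) = 0)"
proof -
  obtain W1 b1 Ls Wo bo where gdef: "g = lrelu_net_eval \<alpha> N W1 b1 Ls Wo bo"
    using g unfolding lrelu_nets_def by blast
  obtain e :: "'dy \<Rightarrow> nat" where e: "bij_betw e UNIV {0..<CARD('dy)}"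
    using ex_bij_betw_finite_nat[of "UNIV::'dy set"] by auto
  define ei where "ei = inv_into UNIV e"
  have eei: "e (ei i) = i" if "i < CARD('dy)" for i
    unfolding ei_def using bij_betw_inv_into_right[OF e] that by auto
  define P :: "real^'dy \<Rightarrow> real^'dy" where
    "P = (\<lambda>u. \<chi> k'. if e k' < N then (\<Sum>k\<in>UNIV. u $ k * Wo k (e k')) else 0)"
  have linP: "linear P"
    by (rule linearI) (auto simp: P_def vec_eq_iff sum.distrib algebra_simps sum_distrib_left)
  have "\<not> surj P"
  proof
    assume "surj P"
    then obtain u where "P u = axis (ei N) 1" by (metis surjD)
    hence "P u $ ei N = 1" by simp
    moreover have "P u $ ei N = 0" using eei[OF N] by (simp add: P_def)
    ultimately show False by simp
  qed
  hence "\<not> inj P" using linear_injective_imp_surjective[OF linP] by blast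
  then obtain u where u: "P u = 0" "u \<noteq> 0" using linear_injective_0[OF linP] by blast
  have orth: "(\<Sum>k\<in>UNIV. u $ k * Wo k j) = 0" if "j < N" for j
  proof -
    have "P u $ ei j = 0" using u(1) by simp
    thus ?thesis using eei[of j] that N by (simp add: P_def)
  qed
  define w where "w = u /\<^sub>R norm u"
  have nw: "norm w = 1" using u(2) by (simp add: w_def)
  have orthw: "(\<Sum>k\<in>UNIV. w $ k * Wo k j) = 0" if "j < N" for j
  proof -
    have "(\<Sum>k\<in>UNIV. w $ k * Wo k j) = (\<Sum>k\<in>UNIV. u $ k * Wo k j) / norm u"
      by (simp add: w_def sum_divide_distrib divide_inverse mult_ac sum_distrib_left)
    thus ?thesis using orth[OF that] by simp
  qed
  have "inner w (g x - g y) = 0" for x y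
  proof -
    define vx where "vx = foldl (\<lambda>v (W, b). lrelu_act \<alpha> N (hidden_layer N W b v)) (lrelu_act \<alpha> N (first_layer N W1 b1 x)) Ls"
    define vy where "vy = foldl (\<lambda>v (W, b). lrelu_act \<alpha> N (hidden_layer N W b v)) (lrelu_act \<alpha> N (first_layer N W1 b1 y)) Ls"
    have "g x - g y = (\<chi> k. \<Sum>j<N. Wo k j * (vx j - vy j))"
      by (simp add: gdef lrelu_net_eval_def output_layer_def vx_def vy_def vec_eq_iff
          algebra_simps sum_subtractf)
    hence "inner w (g x - g y) = (\<Sum>k\<in>UNIV. w $ k * (\<Sum>j<N. Wo k j * (vx j - vy j)))"
      by (simp add: inner_vec_def)
    also have "\<dots> = (\<Sum>j<N. (\<Sum>k\<in>UNIV. w $ k * Wo k j) * (vx j - vy j))"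
      by (simp add: sum_distrib_left sum_distrib_right sum.swap[of _ "UNIV::'dy set"] mult.assoc)
    also have "\<dots> = 0" using orthw by simp
    finally show ?thesis .
  qed
  thus ?thesis using nw by blast
qed


lemma case_dy:
  fixes K :: "(real^'dx::finite) set" and \<alpha> :: real and N :: nat
  assumes K: "interior K \<noteq> {}" and N: "N < CARD('dy::finite)"
  shows "\<exists>f :: real^'dx \<Rightarrow> real^'dy. continuous_on K f \<and>
           (\<exists>\<epsilon>>0. \<forall>g\<in>lrelu_nets \<alpha> N. \<exists>x\<in>K. \<epsilon> \<le> dist (f x) (g x))"
proof -
  obtain c where "c \<in> interior K" using K by blast
  then obtain r where r: "r > 0" "ball c r \<subseteq> K" using mem_interior by blast
  obtain e :: "'dy \<Rightarrow> nat" where e: "bij_betw e UNIV {0..<CARD('dy)}"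
    using ex_bij_betw_finite_nat[of "UNIV::'dy set"] by auto
  have einj: "e k = e k' \<Longrightarrow> k = k'" for k k' using e by (auto simp: bij_betw_def inj_def)
  have elt: "e k < CARD('dy)" for k using e by (auto simp: bij_betw_def)
  define D where "D = real CARD('dy)"
  have D1: "D \<ge> 1" unfolding D_def by (simp add: Suc_le_eq)
  define \<rho> where "\<rho> = r / (D + 2)"
  have \<rho>0: "\<rho> > 0" unfolding \<rho>_def using r(1) D1 by simp
  define i0 :: 'dx where "i0 = undefined"
  define q where "q = (\<lambda>k. c + ((real (e k) + 1) * \<rho>) *\<^sub>R axis i0 (1::real))"
  define f :: "real^'dx \<Rightarrow> real^'dy" where "f = (\<lambda>x. \<chi> k. max 0 (1 - dist x (q k) / \<rho>))"
  have cf: "continuous_on K f" unfolding f_def using \<rho>0 by (intro continuous_intros) auto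
  have c_as: "c = c + 0 *\<^sub>R axis i0 (1::real)" by simp
  have dcq: "dist c (q k) = (real (e k) + 1) * \<rho>" for k
    unfolding q_def by (subst c_as, subst dist_axis_line) (use \<rho>0 in simp)
  have fc: "f c = 0" unfolding f_def vec_eq_iff using dcq \<rho>0
    by (auto simp: field_simps)
  have qK: "q k \<in> K" for k
  proof -
    have "real (e k) + 1 \<le> D" using elt[of k] unfolding D_def by linarith
    hence "(real (e k) + 1) * \<rho> < (D + 2) * \<rho>" using \<rho>0 by simp
    also have "\<dots> = r" unfolding \<rho>_def using D1 by simp
    finally show ?thesis using r(2) dcq[of k] by auto
  qed
  have fq: "f (q k) = axis k 1" for k
    unfolding vec_eq_iff
  proof
    fix k'
    show "f (q k) $ k' = axis k 1 $ k'"
    proof (cases "k' = k")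
      case True thus ?thesis by (simp add: f_def axis_def)
    next
      case False
      hence "e k \<noteq> e k'" using einj by blast
      hence "\<bar>real (e k) - real (e k')\<bar> \<ge> 1" by linarith
      moreover have "dist (q k) (q k') = \<bar>real (e k) - real (e k')\<bar> * \<rho>"
        unfolding q_def dist_axis_line using \<rho>0 by (simp add: algebra_simps abs_mult_pos' flip: abs_mult)
      ultimately have "dist (q k) (q k') \<ge> \<rho>" using \<rho>0
        using mult_right_mono[of 1 "\<bar>real (e k) - real (e k')\<bar>" \<rho>] by simp
      hence "1 - dist (q k) (q k') / \<rho> \<le> 0" using \<rho>0 by (simp add: field_simps)
      thus ?thesis using False by (simp add: f_def axis_def)
    qed
  qed
  define \<epsilon> where "\<epsilon> = 1 / (2 * D)"
  have \<epsilon>0: "\<epsilon> > 0" unfolding \<epsilon>_def using D1 by simp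
  have "\<forall>g\<in>lrelu_nets \<alpha> N. \<exists>x\<in>K. \<epsilon> \<le> dist (f x) (g x)"
  proof (rule ballI, rule ccontr)
    fix g :: "real^'dx \<Rightarrow> real^'dy"
    assume g: "g \<in> lrelu_nets \<alpha> N" and "\<not> (\<exists>x\<in>K. \<epsilon> \<le> dist (f x) (g x))"
    hence close: "\<And>x. x \<in> K \<Longrightarrow> dist (f x) (g x) < \<epsilon>" by force
    obtain w where w: "norm w = 1" "\<And>x y. inner w (g x - g y) = 0"
      using net_orth[OF N g] by blast
    have cK: "c \<in> K" using r by auto
    have bnd: "\<bar>inner w (f x - g x)\<bar> < \<epsilon>" if "x \<in> K" for x
      using Cauchy_Schwarz_ineq2[of w "f x - g x"] w(1) close[OF that] by (simp add: dist_norm)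
    have wk: "\<bar>w $ k\<bar> < 1 / D" for k
    proof -
      have "w $ k = inner w (f (q k) - f c)" by (simp add: fq fc inner_axis)
      also have "f (q k) - f c = (f (q k) - g (q k)) + (g (q k) - g c) + (g c - f c)" by simp
      finally have "w $ k = inner w (f (q k) - g (q k)) + inner w (g (q k) - g c) - inner w (f c - g c)"
        by (simp add: inner_add_right inner_diff_right)
      hence "\<bar>w $ k\<bar> \<le> \<bar>inner w (f (q k) - g (q k))\<bar> + \<bar>inner w (f c - g c)\<bar>" using w(2) by simp
      also have "\<dots> < \<epsilon> + \<epsilon>" using bnd[OF qK] bnd[OF cK] by (rule add_strict_mono)
      also have "\<epsilon> + \<epsilon> = 1 / D" unfolding \<epsilon>_def using D1 by simp
      finally show ?thesis .
    qed
    have "1 = norm w" using w(1) by simp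
    also have "\<dots> \<le> (\<Sum>k\<in>UNIV. \<bar>w $ k\<bar>)" by (rule norm_le_l1_cart)
    also have "\<dots> < (\<Sum>k\<in>(UNIV::'dy set). 1 / D)" by (rule sum_strict_mono) (use wk in auto)
    also have "\<dots> = 1" using D1 unfolding D_def by simp
    finally show False by simp
  qed
  thus ?thesis using cf \<epsilon>0 by blast
qed

theorem lemma2p3:
  fixes K :: "(real^'dx::finite) set" and \<alpha> :: real and N :: nat
  assumes "\<alpha> > 0" and "\<alpha> \<noteq> 1"
    and "compact K" and "interior K \<noteq> {}"
    and "N < max (CARD('dx) + 1) (CARD('dy::finite))"
  shows "\<exists>f :: real^'dx \<Rightarrow> real^'dy. continuous_on K f \<and>
           (\<exists>\<epsilon>>0. \<forall>g\<in>lrelu_nets \<alpha> N. \<exists>x\<in>K. \<epsilon> \<le> dist (f x) (g x))"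
proof (cases "N \<le> CARD('dx)")
  case True
  show ?thesis by (rule case_dx[OF assms(1) assms(4) True])
next
  case False
  hence "N < CARD('dy)" using assms(5) by simp
  thus ?thesis by (rule case_dy[OF assms(4)])
qed

end
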